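(* For every $f\in\mathrm{Sp}(1,\mathbb{R})=\mathrm{SL}(2,\mathbb{R})$, $s(f)=i^{-n(f)}$.
   Context: Let $V=\mathbb{R}^{2}$ with basis $p,q$ and symplectic form $\omega(p,q)=-\omega(q,p)=1$, $\omega(p,p)=\omega(q,q)=0$; $\mathrm{Sp}(1,\mathbb{R})$ is its isometry group; $\lambda_0=\mathrm{span}\{p\}$. A lagrangian is a subspace equal to its own $\omega$-orthogonal. Definition of $s$: for oriented lagrangians $\lambda_1,\lambda_2$ of a real symplectic space, let $\kappa=\lambda_1\cap\lambda_2$. If $\kappa=0$, $\epsilon(\lambda_1,\lambda_2)=\mathrm{sgn}\det(\omega(a_i,b_j))$ for positive bases $(a_i)$ of $\lambda_1$, $(b_j)$ of $\lambda_2$. If $\kappa\neq0$, orient $\kappa$ arbitrarily, orient $\lambda_i/\kappa$ so that a positive basis of $\kappa$ followed by lifts of a positive basis of $\lambda_i/\kappa$ is positive in $\lambda_i$, and set $\epsilon(\lambda_1,\lambda_2)=\epsilon(\lambda_1/\kappa,\lambda_2/\kappa)$ in $\kappa^\perp/\kappa$; if $\lambda_1=\lambda_2$, $\epsilon=1$ if orientations agree and $-1$ otherwise. Put $s(\lambda_1,\lambda_2)=i^{\dim\lambda_1-\dim\kappa}\epsilon(\lambda_1,\lambda_2)$, and $s(f)=s(\lambda_0,f(\lambda_0))$ with $\lambda_0$ arbitrarily oriented and $f(\lambda_0)$ given the image orientation. Definition of $n$: for $f\in\mathrm{Sp}(1,\mathbb{R})$, $\star_f$ is the nonsingular bilinear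 form on $(f-1)V$ with $a\star_f b=\omega(x,b)$ where $(f-1)x=a$; $\mathrm{sgn}[\det(\star_f)]\in\{\pm1\}$ is the sign of the determinant of its Gram matrix, with value $1$ when $f=\mathrm{Id}$; $\star_{f,\lambda_0}$ is its (symmetric) restriction to $\lambda_0\cap(f-1)V$. Then $n(f)=\mathrm{Signature}(\star_{f,\lambda_0})-\dim((f-1)V)-\mathrm{sgn}[\det(\star_f)]+1$. *)

theory Defs
  imports "HOL-Analysis.Analysis"
begin

definition pv :: "real^2" where "pv = axis 1 1"
definition qv :: "real^2" where "qv = axis 2 1"

definition omega :: "real^2 \<Rightarrow> real^2 \<Rightarrow> real" where
  "omega x y = x$1 * y$2 - x$2 * y$1"

definition Sp1 :: "(real^2^2) set" where
  "Sp1 = {f. \<forall>x y. omega (f *v x) (f *v y) = omega x y}"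

definition lambda0 :: "(real^2) set" where "lambda0 = span {pv}"

text \<open>In V = R^2 every lagrangian is a line; an oriented lagrangian is given by
  a nonzero vector a (its positive basis), the lagrangian being span {a}.
  eps_or a b is epsilon(span{a}, span{b}) with these orientations.\<close>

definition eps_or :: "real^2 \<Rightarrow> real^2 \<Rightarrow> real" where
  "eps_or a b =
     (if span {a} \<inter> span {b} = {0} then sgn (omega a b)
      else if (\<exists>c>0. b = c *s a) then 1 else -1)"

definition s_or :: "real^2 \<Rightarrow> real^2 \<Rightarrow> complex" where
  "s_or a b = \<i> ^ (dim (span {a}) - dim (span {a} \<inter> span {b})) * complex_of_real (eps_or a b)"

text \<open>s(f) with lambda0 oriented by the nonzero vector a \<in> lambda0,
  f(lambda0) carrying the image orientation f a.\<close>
definition s_sp :: "real^2^2 \<Rightarrow> real^2 \<Rightarrow> complex" where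
  "s_sp f a = s_or a (f *v a)"

definition imgV :: "real^2^2 \<Rightarrow> (real^2) set" where
  "imgV f = range (\<lambda>x. f *v x - x)"

definition star :: "real^2^2 \<Rightarrow> real^2 \<Rightarrow> real^2 \<Rightarrow> real" where
  "star f a b = omega (SOME x. f *v x - x = a) b"

definition gram_det :: "('a \<Rightarrow> 'a \<Rightarrow> real) \<Rightarrow> 'a list \<Rightarrow> real" where
  "gram_det B bs = (\<Sum>p | p permutes {..<length bs}.
       of_int (sign p) * (\<Prod>i<length bs. B (bs ! i) (bs ! (p i))))"

text \<open>Sign of the determinant of the Gram matrix of B on the subspace W,
  w.r.t. some basis of W (the sign is basis independent).\<close>
definition sgn_det_form :: "(real^2 \<Rightarrow> real^2 \<Rightarrow> real) \<Rightarrow> (real^2) set \<Rightarrow> real" where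
  "sgn_det_form B W = sgn (gram_det B (SOME bs. distinct bs \<and> independent (set bs)
                                          \<and> span (set bs) = W))"

definition signature :: "(real^2 \<Rightarrow> real^2 \<Rightarrow> real) \<Rightarrow> (real^2) set \<Rightarrow> int" where
  "signature B U =
     int (GREATEST k. \<exists>S. subspace S \<and> S \<subseteq> U \<and> dim S = k \<and> (\<forall>x\<in>S. x \<noteq> 0 \<longrightarrow> B x x > 0))
   - int (GREATEST k. \<exists>S. subspace S \<and> S \<subseteq> U \<and> dim S = k \<and> (\<forall>x\<in>S. x \<noteq> 0 \<longrightarrow> B x x < 0))"

definition n_index :: "real^2^2 \<Rightarrow> int" where
  "n_index f = signature (star f) (lambda0 \<inter> imgV f) - int (dim (imgV f))
                 - \<lfloor>sgn_det_form (star f) (imgV f)\<rfloor> + 1"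

end

theory Submission
  imports Defs
begin

lemma mv1: "((f::real^2^2) *v x)$1 = f$1$1*x$1 + f$1$2*x$2" by (simp add: matrix_vector_mult_def sum_2)
lemma mv2: "((f::real^2^2) *v x)$2 = f$2$1*x$1 + f$2$2*x$2" by (simp add: matrix_vector_mult_def sum_2)
lemma pv1[simp]: "pv$1 = 1" "pv$2 = 0" "qv$1 = 0" "qv$2 = 1" by (auto simp: pv_def qv_def axis_def)
lemma v2eq: "(x::real^2) = y \<longleftrightarrow> x$1 = y$1 \<and> x$2 = y$2" by (simp add: vec_eq_iff forall_2)

lemma indep_sing: "(u::real^2) \<noteq> 0 \<Longrightarrow> independent {u}"
  by (simp add: independent_insert)

lemma dim_span_sing: "(u::real^2) \<noteq> 0 \<Longrightarrow> dim (span {u}) = 1"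
  using dim_span_eq_card_independent[OF indep_sing] by simp

lemma dim_zero_set: "dim {0::real^2} = 0"
  by (metis dim_empty dim_span span_empty)

lemma span_zero_set: "span {0::real^2} = {0}"
  by (simp add: span_singleton)

lemma omega_zero_span:
  assumes "(u::real^2) \<noteq> 0" "omega u w = 0" shows "w \<in> span {u}"
proof -
  have o: "u$1 * w$2 = u$2 * w$1" using assms(2) by (simp add: omega_def)
  show ?thesis
  proof (cases "u$1 = 0")
    case True
    then have "u$2 \<noteq> 0" using assms(1) by (simp add: v2eq)
    then have "w = (w$2/u$2) *\<^sub>R u" using o True by (simp add: v2eq field_simps)
    then show ?thesis by (metis span_base span_scale singletonI)
  next
    case False
    then have "w = (w$1/u$1) *\<^sub>R u" using o by (simp add: v2eq field_simps)
    then show ?thesis by (metis span_base span_scale singletonI)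
  qed
qed

lemma omega_mv: "omega ((f::real^2^2) *v x) (f *v y) = (f$1$1*f$2$2 - f$1$2*f$2$1) * omega x y"
  by (simp add: omega_def mv1 mv2 algebra_simps)

lemma Sp1_det: "f \<in> Sp1 \<Longrightarrow> f$1$1*f$2$2 - f$1$2*f$2$1 = 1"
  using omega_mv[of f pv qv] unfolding Sp1_def by (auto simp: omega_def)

lemma star_eq:
  assumes "f \<in> Sp1" "f *v x - x = a" "b \<in> imgV f"
  shows "star f a b = omega x b"
proof -
  obtain w where w: "b = f *v w - w" using assms(3) by (auto simp: imgV_def)
  have det: "f$1$1*f$2$2 - f$1$2*f$2$1 = 1" using Sp1_det[OF assms(1)] .
  have "omega y b = omega x b" if y: "f *v y - y = a" for y
  proof -
    define z where "z = y - x"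
    have fz: "f *v z = z" using y assms(2) unfolding z_def
      by (simp add: matrix_vector_mult_diff_distrib algebra_simps)
    have "omega (f *v z) (f *v w) = omega z w" using omega_mv[of f z w] det by simp
    then have "omega z (f *v w) = omega z w" using fz by simp
    then have "omega z b = 0" unfolding w omega_def by (simp add: algebra_simps)
    then show ?thesis unfolding z_def omega_def by (simp add: algebra_simps)
  qed
  then show ?thesis unfolding star_def by (metis (mono_tags, lifting) assms(2) someI2)
qed


lemma greatest_dim_sing:
  fixes B :: "real^2 \<Rightarrow> real^2 \<Rightarrow> real" and v :: "real^2"
  assumes hom: "\<And>c. B (c *\<^sub>R v) (c *\<^sub>R v) = c^2 * B v v"
  shows "(GREATEST k. \<exists>S. subspace S \<and> S \<subseteq> span {v} \<and> dim S = k \<and> (\<forall>x\<in>S. x \<noteq> 0 \<longrightarrow> B x x > 0))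
        = (if B v v > 0 then 1 else 0)"
proof (rule Greatest_equality)
  have B0: "B 0 0 = 0" using hom[of 0] by simp
  show "\<exists>S. subspace S \<and> S \<subseteq> span {v} \<and> dim S = (if B v v > 0 then 1 else 0) \<and> (\<forall>x\<in>S. x \<noteq> 0 \<longrightarrow> B x x > 0)"
  proof (cases "B v v > 0")
    case True
    then have "v \<noteq> 0" using B0 by auto
    moreover have "\<forall>x\<in>span {v}. x \<noteq> 0 \<longrightarrow> B x x > 0"
    proof (intro ballI impI)
      fix x assume "x \<in> span {v}" "x \<noteq> 0"
      then obtain c where c: "x = c *\<^sub>R v" by (auto simp: span_singleton)
      with \<open>x \<noteq> 0\<close> have "c \<noteq> 0" by auto
      then have "c^2 > 0" by simp
      then show "B x x > 0" using True c hom[of c] by simp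
    qed
    ultimately show ?thesis using True
      by (intro exI[of _ "span {v}"]) (auto simp: dim_span_sing)
  next
    case False
    then show ?thesis
      by (intro exI[of _ "{0}"]) (auto simp: dim_zero_set span_zero)
  qed
  fix k assume "\<exists>S. subspace S \<and> S \<subseteq> span {v} \<and> dim S = k \<and> (\<forall>x\<in>S. x \<noteq> 0 \<longrightarrow> B x x > 0)"
  then obtain S where S: "subspace S" "S \<subseteq> span {v}" "dim S = k" "\<forall>x\<in>S. x \<noteq> 0 \<longrightarrow> B x x > 0" by blast
  have "dim S \<le> dim (span {v})" using S(2) by (rule dim_subset)
  also have "\<dots> \<le> 1" using dim_le_card[of "{v}" "{v}"] by simp
  finally have k1: "k \<le> 1" using S(3) by simp
  show "k \<le> (if B v v > 0 then 1 else 0)"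
  proof (cases "B v v > 0")
    case False
    have "S \<subseteq> {0}"
    proof
      fix x assume "x \<in> S"
      show "x \<in> {0}"
      proof (rule ccontr)
        assume "x \<notin> {0}"
        then have "x \<noteq> 0" by simp
        with \<open>x \<in> S\<close> S(4) have "B x x > 0" by blast
        from \<open>x \<in> S\<close> S(2) obtain c where c: "x = c *\<^sub>R v" by (auto simp: span_singleton)
        have "B x x = c^2 * B v v" using c hom by simp
        moreover have "c^2 \<ge> 0" by simp
        ultimately have "B x x \<le> 0" using False by (simp add: mult_nonneg_nonpos)
        then show False using \<open>B x x > 0\<close> by simp
      qed
    qed
    then have "dim S \<le> dim {0::real^2}" by (rule dim_subset)
    then show ?thesis using S(3) False dim_zero_set by simp
  qed (use k1 in auto)
qed

lemma signature_sing:
  fixes B :: "real^2 \<Rightarrow> real^2 \<Rightarrow> real" and v :: "real^2"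
  assumes hom: "\<And>c. B (c *\<^sub>R v) (c *\<^sub>R v) = c^2 * B v v"
  shows "signature B (span {v}) = (if B v v > 0 then 1 else if B v v < 0 then -1 else 0)"
proof -
  have p: "(GREATEST k. \<exists>S. subspace S \<and> S \<subseteq> span {v} \<and> dim S = k \<and> (\<forall>x\<in>S. x \<noteq> 0 \<longrightarrow> B x x > 0))
        = (if B v v > 0 then 1 else 0)"
    using greatest_dim_sing[of B v] hom by blast
  have hom': "\<And>c. - B (c *\<^sub>R v) (c *\<^sub>R v) = c^2 * (- B v v)" using hom by simp
  have n: "(GREATEST k. \<exists>S. subspace S \<and> S \<subseteq> span {v} \<and> dim S = k \<and> (\<forall>x\<in>S. x \<noteq> 0 \<longrightarrow> B x x < 0))
        = (if B v v < 0 then 1 else 0)"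
    using greatest_dim_sing[of "\<lambda>x y. - B x y" v] hom' by simp
  show ?thesis unfolding signature_def p n by auto
qed


lemma perms_eq:
  assumes "card {p. p permutes (S::nat set)} = card A" "finite S" "A \<subseteq> {p. p permutes S}" "finite A"
  shows "{p. p permutes S} = A"
  using assms by (metis card_subset_eq finite_permutations)

lemma perms1: "{p. p permutes {..<Suc 0}} = {id}"
  by (rule perms_eq) (auto simp: card_permutations permutes_id)

lemma perms0: "{p. p permutes {..<0::nat}} = {id}"
  by (rule perms_eq) (auto simp: card_permutations permutes_id)

lemma perms2: "{p. p permutes {..<2::nat}} = {id, Transposition.transpose 0 1}"
proof (rule perms_eq)
  have "id \<noteq> Transposition.transpose (0::nat) 1"
    by (metis id_apply transpose_apply_first zero_neq_one)
  then show "card {p. p permutes {..<2::nat}} = card {id, Transposition.transpose (0::nat) 1}"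
    by (simp add: card_permutations)
qed (auto simp: permutes_id permutes_swap_id)

lemma perms2': "{p. p permutes {..<Suc (Suc 0)}} = {id, Transposition.transpose 0 (Suc 0)}"
  using perms2 by (simp add: numeral_2_eq_2)

lemma gram0: "gram_det B [] = 1"
  by (simp add: gram_det_def perms0)

lemma gram1: "gram_det B [b] = B b b"
  by (simp add: gram_det_def perms1)

lemma gram2: "gram_det B [b1, b2] = B b1 b1 * B b2 b2 - B b1 b2 * B b2 b1"
proof -
  have "id \<noteq> Transposition.transpose (0::nat) 1"
    by (metis id_apply transpose_apply_first zero_neq_one)
  then have "gram_det B [b1, b2] = (\<Sum>p\<in>{id, Transposition.transpose (0::nat) 1}.
       of_int (sign p) * (\<Prod>i<2. B ([b1,b2] ! i) ([b1,b2] ! (p i))))"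
    unfolding gram_det_def by (simp only: perms2' length_Cons list.size add_0 numeral_2_eq_2 One_nat_def)
  also have "\<dots> = B b1 b1 * B b2 b2 - B b1 b2 * B b2 b1"
    using \<open>id \<noteq> _\<close> by (simp add: sign_swap_id sign_id lessThan_Suc numeral_2_eq_2 transpose_def)
  finally show ?thesis .
qed


lemma dim_set_list:
  assumes "distinct bs" "independent (set bs)" "span (set bs) = W"
  shows "length bs = dim W"
  using assms dim_span_eq_card_independent[OF assms(2)] distinct_card by metis

lemma sgn_det_zero: "sgn_det_form B {0} = 1"
  unfolding sgn_det_form_def
proof (rule someI2[of _ "[]"])
  show "distinct [] \<and> independent (set []) \<and> span (set []) = {0::real^2}" by (simp add: independent_empty)
  fix bs :: "(real^2) list" assume a: "distinct bs \<and> independent (set bs) \<and> span (set bs) = {0}"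
  then have "length bs = 0" using dim_set_list[of bs "{0}"] dim_zero_set by simp
  then show "sgn (gram_det B bs) = 1" by (simp add: gram0)
qed

lemma sgn_det_span1:
  assumes u: "(u::real^2) \<noteq> 0" and hom: "\<And>c. B (c *\<^sub>R u) (c *\<^sub>R u) = c^2 * B u u"
  shows "sgn_det_form B (span {u}) = sgn (B u u)"
  unfolding sgn_det_form_def
proof (rule someI2[of _ "[u]"])
  show "distinct [u] \<and> independent (set [u]) \<and> span (set [u]) = span {u}" using indep_sing[OF u] by simp
  fix bs :: "(real^2) list" assume a: "distinct bs \<and> independent (set bs) \<and> span (set bs) = span {u}"
  then have "length bs = 1" using dim_set_list[of bs "span {u}"] dim_span_sing[OF u] by simp
  then obtain b where bs: "bs = [b]" by (metis One_nat_def length_0_conv length_Suc_conv)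
  then have "b \<in> span {u}" using a by (metis list.set_intros(1) span_base)
  then obtain c where c: "b = c *\<^sub>R u" by (auto simp: span_singleton)
  have "b \<noteq> 0" using a bs dependent_zero by force
  then have "c \<noteq> 0" using c by auto
  then have "c^2 > 0" by simp
  have "gram_det B bs = c^2 * B u u" using bs c hom by (simp add: gram1)
  then have "sgn (gram_det B bs) = sgn (c^2) * sgn (B u u)" by (simp only: sgn_mult)
  moreover have "sgn (c^2) = (1::real)" using \<open>c^2 > 0\<close> by (simp only: sgn_pos)
  ultimately show "sgn (gram_det B bs) = sgn (B u u)" by simp
qed

lemma sgn_det_univ:
  assumes B: "\<And>a b. B a b = (c11*a$1 + c12*a$2)*b$2 - (c21*a$1 + c22*a$2)*b$1"
  shows "sgn_det_form B UNIV = sgn (c11*c22 - c12*c21)"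
  unfolding sgn_det_form_def
proof (rule someI2[of _ "[pv, qv]"])
  have pq: "pv \<noteq> qv" by (simp add: v2eq)
  have q0: "qv \<noteq> 0" by (simp add: v2eq)
  have "pv \<notin> span {qv}" by (auto simp: span_singleton v2eq)
  then have ind: "independent {pv, qv}" using indep_sing[OF q0] by (simp add: independent_insert)
  have "x \<in> span {pv, qv}" for x
  proof -
    have "x = x$1 *\<^sub>R pv + x$2 *\<^sub>R qv" by (simp add: v2eq)
    moreover have "x$1 *\<^sub>R pv \<in> span {pv, qv}" by (intro span_scale span_base) simp
    moreover have "x$2 *\<^sub>R qv \<in> span {pv, qv}" by (intro span_scale span_base) simp
    ultimately show ?thesis using span_add by metis
  qed
  then show "distinct [pv, qv] \<and> independent (set [pv, qv]) \<and> span (set [pv, qv]) = UNIV"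
    using pq ind by auto
  fix bs :: "(real^2) list" assume a: "distinct bs \<and> independent (set bs) \<and> span (set bs) = UNIV"
  then have "length bs = 2" using dim_set_list[of bs UNIV] by simp
  then obtain b1 b2 where bs: "bs = [b1, b2]"
    by (auto simp: length_Suc_conv numeral_2_eq_2)
  have "b1 \<notin> span {b2}" "b2 \<noteq> 0" using a bs by (auto simp: independent_insert)
  then have w: "omega b2 b1 \<noteq> 0" using omega_zero_span by blast
  have "gram_det B bs = (c11*c22 - c12*c21) * (omega b2 b1)^2"
    unfolding bs gram2 B omega_def power2_eq_square by algebra
  then have "sgn (gram_det B bs) = sgn (c11*c22 - c12*c21) * sgn ((omega b2 b1)^2)" by (simp only: sgn_mult)
  moreover have "sgn ((omega b2 b1)^2) = (1::real)" proof -
    have "(omega b2 b1)^2 > 0" using w by simp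
    then show ?thesis by (simp only: sgn_pos)
  qed
  ultimately show "sgn (gram_det B bs) = sgn (c11*c22 - c12*c21)" by simp
qed


lemma omega_img: "omega ((f::real^2^2) *v x - x) (f *v y - y) = ((f$1$1-1)*(f$2$2-1) - f$1$2*f$2$1) * omega x y"
  unfolding omega_def by (simp add: mv1 mv2) algebra

lemma mv_scale: "(f::real^2^2) *v (c *\<^sub>R x) - c *\<^sub>R x = c *\<^sub>R (f *v x - x)"
  by (simp add: v2eq mv1 mv2 algebra_simps)

lemma in_imgV: "f *v y - y \<in> imgV f" by (auto simp: imgV_def)

lemma star_hom:
  assumes "f \<in> Sp1" "f *v y - y = v"
  shows "star f (c *\<^sub>R v) (c *\<^sub>R v) = c^2 * star f v v"
proof -
  have "star f (c *\<^sub>R v) (c *\<^sub>R v) = omega (c *\<^sub>R y) (c *\<^sub>R v)"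
    by (rule star_eq[OF assms(1)]) (use assms mv_scale in_imgV in metis)+
  moreover have "star f v v = omega y v" by (rule star_eq[OF assms]) (use assms in_imgV in metis)
  moreover have "omega (c *\<^sub>R y) (c *\<^sub>R v) = c^2 * omega y v"
    by (simp add: omega_def power2_eq_square algebra_simps)
  ultimately show ?thesis by simp
qed

lemma img_rank1:
  assumes D: "(f$1$1-1)*(f$2$2-1) - f$1$2*f$2$1 = 0" and u: "u = f *v x0 - x0" "u \<noteq> 0"
  shows "imgV f = span {u}"
proof
  show "imgV f \<subseteq> span {u}"
  proof
    fix w assume "w \<in> imgV f"
    then obtain x where "w = f *v x - x" by (auto simp: imgV_def)
    then have "omega u w = 0" using omega_img[of f x0 x] D u by simp
    then show "w \<in> span {u}" using omega_zero_span u(2) by blast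
  qed
  show "span {u} \<subseteq> imgV f"
  proof
    fix w assume "w \<in> span {u}"
    then obtain c where "w = c *\<^sub>R u" by (auto simp: span_singleton)
    then have "w = f *v (c *\<^sub>R x0) - c *\<^sub>R x0" using mv_scale u by simp
    then show "w \<in> imgV f" using in_imgV by metis
  qed
qed

definition sig3 :: "real \<Rightarrow> int" where "sig3 x = (if x > 0 then 1 else if x < 0 then -1 else 0)"

lemma n_rank1:
  assumes S: "f \<in> Sp1" and D: "(f$1$1-1)*(f$2$2-1) - f$1$2*f$2$1 = 0" and u: "u = f *v x0 - x0" "u \<noteq> 0"
    and L: "lambda0 \<inter> span {u} = span {v}" and v: "v = f *v y0 - y0"
  shows "n_index f = sig3 (omega y0 v) - \<lfloor>sgn (omega x0 u)\<rfloor>"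
proof -
  have img: "imgV f = span {u}" by (rule img_rank1[OF D u])
  have "signature (star f) (lambda0 \<inter> imgV f) = sig3 (star f v v)"
    unfolding img L sig3_def by (rule signature_sing) (rule star_hom[OF S v[symmetric]])
  moreover have "star f v v = omega y0 v" by (rule star_eq[OF S v[symmetric]]) (use v in_imgV in metis)
  moreover have "sgn_det_form (star f) (imgV f) = sgn (star f u u)"
    unfolding img by (rule sgn_det_span1[OF u(2)]) (rule star_hom[OF S u(1)[symmetric]])
  moreover have "star f u u = omega x0 u" by (rule star_eq[OF S u(1)[symmetric]]) (use u in_imgV in metis)
  moreover have "dim (imgV f) = 1" unfolding img by (rule dim_span_sing[OF u(2)])
  ultimately show ?thesis unfolding n_index_def by simp
qed

lemma n_id:
  assumes S: "f \<in> Sp1" and f: "f$1$1 = 1" "f$2$2 = 1" "f$1$2 = 0" "f$2$1 = 0"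
  shows "n_index f = 0"
proof -
  have mz: "f *v x - x = 0" for x using f by (simp add: v2eq mv1 mv2)
  have img: "imgV f = {0}" unfolding imgV_def using mz by auto
  have L: "lambda0 \<inter> imgV f = span {0}" unfolding img span_zero_set lambda0_def by (auto simp: span_zero)
  have "signature (star f) (lambda0 \<inter> imgV f) = 0"
  proof -
    have z: "f *v 0 - 0 = (0::real^2)" by simp
    have "star f 0 0 = omega 0 0" by (rule star_eq[OF S z]) (metis z in_imgV)
    then have "star f 0 0 = 0" by (simp add: omega_def)
    moreover have "signature (star f) (span {0}) = sig3 (star f 0 0)"
      unfolding sig3_def by (rule signature_sing) (rule star_hom[OF S z])
    ultimately show ?thesis unfolding L sig3_def by simp
  qed
  moreover have "sgn_det_form (star f) (imgV f) = 1" unfolding img by (rule sgn_det_zero)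
  moreover have "dim (imgV f) = 0" unfolding img by (rule dim_zero_set)
  ultimately show ?thesis unfolding n_index_def by simp
qed


lemma inv2:
  fixes a b c e y1 y2 :: real
  assumes "a*e - b*c \<noteq> 0"
  shows "a*((e*y1 - b*y2)/(a*e - b*c)) + b*((- c*y1 + a*y2)/(a*e - b*c)) = y1"
    "c*((e*y1 - b*y2)/(a*e - b*c)) + e*((- c*y1 + a*y2)/(a*e - b*c)) = y2"
proof -
  have n1: "a*(e*y1 - b*y2) + b*(- c*y1 + a*y2) = (a*e - b*c) * y1" by algebra
  have n2: "c*(e*y1 - b*y2) + e*(- c*y1 + a*y2) = (a*e - b*c) * y2" by algebra
  show "a*((e*y1 - b*y2)/(a*e - b*c)) + b*((- c*y1 + a*y2)/(a*e - b*c)) = y1"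
    using n1 assms by (simp add: times_divide_eq_right add_divide_distrib[symmetric])
  show "c*((e*y1 - b*y2)/(a*e - b*c)) + e*((- c*y1 + a*y2)/(a*e - b*c)) = y2"
    using n2 assms by (simp add: times_divide_eq_right add_divide_distrib[symmetric])
qed

lemma n_inv:
  assumes S: "f \<in> Sp1" and D: "(f$1$1-1)*(f$2$2-1) - f$1$2*f$2$1 \<noteq> 0"
  shows "n_index f = sig3 (f$2$1 / ((f$1$1-1)*(f$2$2-1) - f$1$2*f$2$1)) - 1
             - \<lfloor>sgn ((f$1$1-1)*(f$2$2-1) - f$1$2*f$2$1)\<rfloor>"
proof -
  define d where "d = (f$1$1-1)*(f$2$2-1) - f$1$2*f$2$1"
  have d: "d \<noteq> 0" using D d_def by simp
  define xi :: "real^2 \<Rightarrow> real^2" where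
    "xi y = vector [((f$2$2-1)*y$1 - f$1$2*y$2)/d, (- f$2$1*y$1 + (f$1$1-1)*y$2)/d]" for y
  have xi: "f *v xi y - xi y = y" for y
  proof -
    have e1: "(f *v x)$1 - x$1 = (f$1$1-1)*x$1 + f$1$2*x$2" "(f *v x)$2 - x$2 = f$2$1*x$1 + (f$2$2-1)*x$2" for x
      by (simp_all add: mv1 mv2 algebra_simps)
    note i = inv2[of "f$1$1-1" "f$2$2-1" "f$1$2" "f$2$1" "y$1" "y$2", OF D, folded d_def]
    show ?thesis unfolding v2eq vector_minus_component e1 unfolding xi_def vector_2 using i by simp
  qed
  have "y \<in> imgV f" for y using in_imgV[of f "xi y"] unfolding xi .
  then have img: "imgV f = UNIV" by auto
  have st: "star f a b = omega (xi a) b" for a b by (rule star_eq[OF S xi]) (simp add: img)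
  have L: "lambda0 \<inter> imgV f = span {pv}" by (simp add: img lambda0_def)
  have "signature (star f) (lambda0 \<inter> imgV f) = sig3 (star f pv pv)"
    unfolding L sig3_def by (rule signature_sing) (rule star_hom[OF S xi])
  moreover have "star f pv pv = f$2$1 / d" unfolding st xi_def by (simp add: omega_def)
  moreover have "sgn_det_form (star f) (imgV f) =
      sgn (((f$2$2-1)/d) * ((f$1$1-1)/d) - (- f$1$2/d) * (- f$2$1/d))"
    unfolding img by (rule sgn_det_univ) (use d in \<open>simp add: st xi_def omega_def field_simps\<close>)
  moreover have "((f$2$2-1)/d) * ((f$1$1-1)/d) - (- f$1$2/d) * (- f$2$1/d) = 1 / d"
  proof -
    have g: "(p/d)*(q/d) - (-r/d)*(-t/d) = (p*q - r*t)/(d*d)" for p q r t :: real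
      by (simp add: divide_simps)
    have "(f$2$2-1)*(f$1$1-1) - f$1$2*f$2$1 = d" unfolding d_def by simp
    then have "((f$2$2-1)/d) * ((f$1$1-1)/d) - (- f$1$2/d) * (- f$2$1/d) = d / (d*d)"
      by (simp only: g)
    then show ?thesis using d by simp
  qed
  moreover have "sgn (1/d) = sgn d" by (simp add: sgn_if)
  moreover have "dim (imgV f) = 2" unfolding img by simp
  ultimately show ?thesis unfolding n_index_def d_def by simp
qed


lemma sgn_sq: "(t::real) \<noteq> 0 \<Longrightarrow> (sgn t)^2 = 1"
  by (cases "t > 0") (auto simp: sgn_if)

lemma s_val:
  assumes S: "f \<in> Sp1" and a: "a \<in> lambda0" "a \<noteq> 0"
  shows "s_sp f a = (if f$2$1 \<noteq> 0 then \<i> * complex_of_real (sgn (f$2$1)) else if f$1$1 > 0 then 1 else -1)"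
proof -
  obtain t where t: "a = t *\<^sub>R pv" using a(1) by (auto simp: lambda0_def span_singleton)
  have t0: "t \<noteq> 0" using t a(2) by auto
  have fa: "(f *v a)$1 = f$1$1 * t" "(f *v a)$2 = f$2$1 * t" "a$1 = t" "a$2 = 0" using t by (simp_all add: mv1 mv2)
  have det: "f$1$1*f$2$2 - f$1$2*f$2$1 = 1" using Sp1_det[OF S] .
  have da: "dim (span {a}) = 1" by (rule dim_span_sing[OF a(2)])
  show ?thesis
  proof (cases "f$2$1 = 0")
    case False
    have I: "span {a} \<inter> span {f *v a} = {0}"
    proof (rule set_eqI, rule iffI)
      fix x assume "x \<in> span {a} \<inter> span {f *v a}"
      then have "x \<in> range (\<lambda>k. k *\<^sub>R a)" "x \<in> range (\<lambda>k. k *\<^sub>R (f *v a))" by (auto simp: span_singleton)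
      then obtain k m where k: "x = k *\<^sub>R a" and m: "x = m *\<^sub>R (f *v a)" by blast
      have "m * (f$2$1 * t) = 0" using arg_cong[OF k, of "\<lambda>v. v$2"] arg_cong[OF m, of "\<lambda>v. v$2"] fa by simp
      then have "m = 0" using False t0 by simp
      then show "x \<in> {0}" using m by simp
    qed (auto simp: span_zero)
    have "omega a (f *v a) = f$2$1 * t^2" unfolding omega_def using fa by (simp add: power2_eq_square)
    then have "sgn (omega a (f *v a)) = sgn (f$2$1)" using t0 by (simp add: sgn_mult sgn_sq)
    then have "eps_or a (f *v a) = sgn (f$2$1)" unfolding eps_or_def using I by simp
    then show ?thesis unfolding s_sp_def s_or_def using I da dim_zero_set False by simp
  next
    case True
    then have al: "f$1$1 \<noteq> 0" using det by auto
    have fa2: "f *v a = f$1$1 *\<^sub>R a" using fa True by (simp add: v2eq)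
    have sp: "span {f *v a} = span {a}" unfolding fa2 span_singleton
    proof (rule set_eqI, rule iffI)
      fix x assume "x \<in> range (\<lambda>k. k *\<^sub>R f $ 1 $ 1 *\<^sub>R a)"
      then show "x \<in> range (\<lambda>k. k *\<^sub>R a)" by auto
    next
      fix x assume "x \<in> range (\<lambda>k. k *\<^sub>R a)"
      then obtain k where "x = k *\<^sub>R a" by auto
      then have "x = (k / f$1$1) *\<^sub>R f $ 1 $ 1 *\<^sub>R a" using al by simp
      then show "x \<in> range (\<lambda>k. k *\<^sub>R f $ 1 $ 1 *\<^sub>R a)" by blast
    qed
    have I: "span {a} \<inter> span {f *v a} = span {a}" unfolding sp by simp
    have nz: "span {a} \<noteq> {0}" using a(2) span_base[of a "{a}"] by auto
    have "(\<exists>c>0. f *v a = c *s a) \<longleftrightarrow> f$1$1 > 0"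
    proof
      assume "\<exists>c>0. f *v a = c *s a"
      then obtain c where "c > 0" "f *v a = c *s a" by blast
      then have "f$1$1 * t = c * t" using fa arg_cong[of "f *v a" "c *s a" "\<lambda>v. v$1"] by auto
      then show "f$1$1 > 0" using t0 \<open>c > 0\<close> by simp
    next
      assume "f$1$1 > 0" then show "\<exists>c>0. f *v a = c *s a" using fa2 by (auto simp: scalar_mult_eq_scaleR)
    qed
    then show ?thesis unfolding s_sp_def s_or_def eps_or_def using I nz True by simp
  qed
qed


lemma floor_m1[simp]: "\<lfloor>(-1::real)\<rfloor> = -1" by (simp add: floor_eq_iff)

lemma i3[simp]: "\<i> ^ 3 = - \<i>" by (simp add: power_numeral_reduce)

theorem proposition3p3:
  fixes f :: "real^2^2" and a :: "real^2"
  assumes "f \<in> Sp1" and "a \<in> lambda0" and "a \<noteq> 0"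
  shows "s_sp f a = \<i> powi (- n_index f)"
proof -
  note S = assms(1)
  have det: "f$1$1*f$2$2 - f$1$2*f$2$1 = 1" using Sp1_det[OF S] .
  note sv = s_val[OF assms]
  show ?thesis
  proof (cases "(f$1$1-1)*(f$2$2-1) - f$1$2*f$2$1 = 0")
    case False
    note nv = n_inv[OF S False]
    define d where "d = (f$1$1-1)*(f$2$2-1) - f$1$2*f$2$1"
    have d: "d \<noteq> 0" using False d_def by simp
    show ?thesis
    proof (cases "f$2$1 = 0")
      case True
      have "f$1$1 * d = - ((f$1$1-1)^2)" unfolding d_def using det True by (simp add: power2_eq_square algebra_simps)
      moreover have "f$1$1 \<noteq> 1" using d True unfolding d_def by auto
      ultimately have ad: "f$1$1 * d < 0" by simp
      show ?thesis
      proof (cases "f$1$1 > 0")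
        case True
        then have "d < 0" using ad by (simp add: mult_less_0_iff)
        then show ?thesis using sv nv \<open>f$2$1 = 0\<close> True unfolding d_def by (simp add: sig3_def)
      next
        case False
        then have "d > 0" using ad by (simp add: mult_less_0_iff)
        then show ?thesis using sv nv \<open>f$2$1 = 0\<close> False unfolding d_def by (simp add: sig3_def)
      qed
    next
      case g: False
      show ?thesis
      proof (cases "d > 0")
        case True
        then show ?thesis using sv nv g unfolding d_def[symmetric]
          by (cases "f$2$1 > 0") (auto simp: sig3_def zero_less_divide_iff divide_less_0_iff)
      next
        case False
        then have "d < 0" using d by simp
        then show ?thesis using sv nv g unfolding d_def[symmetric]
          by (cases "f$2$1 > 0") (auto simp: sig3_def zero_less_divide_iff divide_less_0_iff)
      qed
    qed
  next
    case D: True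
    show ?thesis
    proof (cases "f$2$1 = 0")
      case g: False
      define u where "u = f *v pv - pv"
      have u2: "u$2 = f$2$1" "u$1 = f$1$1 - 1" unfolding u_def by (simp_all add: mv1 mv2)
      have u0: "u \<noteq> 0" using u2 g by (auto simp: v2eq)
      have L: "lambda0 \<inter> span {u} = span {0}"
      proof -
        have "x = 0" if "x \<in> lambda0" "x \<in> span {u}" for x
        proof -
          from that have "x \<in> range (\<lambda>k. k *\<^sub>R pv)" "x \<in> range (\<lambda>k. k *\<^sub>R u)"
            by (auto simp: lambda0_def span_singleton)
          then obtain k m where k: "x = k *\<^sub>R pv" and m: "x = m *\<^sub>R u" by blast
          have "m * f$2$1 = 0" using arg_cong[OF k, of "\<lambda>v. v$2"] arg_cong[OF m, of "\<lambda>v. v$2"] u2 by simp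
          then have "m = 0" using g by simp
          then show ?thesis using m by simp
        qed
        then show ?thesis by (auto simp: span_zero_set span_zero lambda0_def)
      qed
      have z: "(0::real^2) = f *v 0 - 0" by simp
      have nv: "n_index f = sig3 (omega 0 0) - \<lfloor>sgn (omega pv u)\<rfloor>"
        by (rule n_rank1[OF S D u_def u0 L z])
      have "omega pv u = f$2$1" using u2 by (simp add: omega_def)
      then show ?thesis using sv nv g
        by (cases "f$2$1 > 0") (auto simp: sig3_def omega_def)
    next
      case g: True
      have a1: "f$1$1 = 1" "f$2$2 = 1"
      proof -
        have sm: "f$1$1 + f$2$2 = 2" "f$1$1 * f$2$2 = 1" using D det g by (simp_all add: algebra_simps)
        have "(f$1$1 - 1)^2 = f$1$1*(f$1$1+f$2$2) - f$1$1*f$2$2 - 2*f$1$1 + 1"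
          by (simp add: power2_eq_square algebra_simps)
        then have "(f$1$1 - 1)^2 = 0" using sm by simp
        then show "f$1$1 = 1" by simp
        then show "f$2$2 = 1" using det g by simp
      qed
      show ?thesis
      proof (cases "f$1$2 = 0")
        case True
        then have "n_index f = 0" using n_id[OF S a1 True g] by simp
        then show ?thesis using sv g a1 by simp
      next
        case b: False
        define u where "u = f *v qv - qv"
        have u2: "u$2 = 0" "u$1 = f$1$2" unfolding u_def using a1 by (simp_all add: mv1 mv2)
        have u0: "u \<noteq> 0" using u2 b by (auto simp: v2eq)
        have "u = f$1$2 *\<^sub>R pv" using u2 by (simp add: v2eq)
        then have "u \<in> lambda0" unfolding lambda0_def by (simp add: span_base span_scale)
        then have "span {u} \<subseteq> lambda0" unfolding lambda0_def
          by (intro span_minimal) (auto simp: subspace_span)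
        then have L: "lambda0 \<inter> span {u} = span {u}" by blast
        have nv: "n_index f = sig3 (omega qv u) - \<lfloor>sgn (omega qv u)\<rfloor>"
          by (rule n_rank1[OF S D u_def u0 L u_def])
        then show ?thesis using sv g a1
          by (cases "omega qv u > 0"; cases "omega qv u < 0") (auto simp: sig3_def)
      qed
    qed
  qed
qed

end
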